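(* If $H$ is an abelian subgroup of $\operatorname{Sym}_n$ and $S=S_n(H)$, with $n\geq 3$, then $SzS$ is a prime ideal of $S$.
   Context: $S_n(H)$ is the monoid with presentation $\langle a_1,\dots,a_n \mid a_1\cdots a_n = a_{\sigma(1)}\cdots a_{\sigma(n)},\ \sigma\in H\rangle$, and $z=a_1a_2\cdots a_n$. An ideal $Q$ of a monoid $S$ is prime if $Q\neq S$ and, for $u,v\in S$, $uSv\subseteq Q$ implies $u\in Q$ or $v\in Q$. *)

theory Defs
  imports "HOL-Algebra.Sym_Groups"
begin

text \<open>The monoid S_n(H) is represented as the free monoid of words over the
alphabet {1..n} (letter i stands for a_i), modulo the congruence generated by
the defining relations. Elements of S_n(H) are congruence classes of words;
subsets of S_n(H) are represented by sets of words closed under the congruence.\<close>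

definition words :: "nat \<Rightarrow> nat list set" where
  "words n = {w. set w \<subseteq> {1..n}}"

definition zword :: "nat \<Rightarrow> nat list" where
  "zword n = [1..<n+1]"

inductive Scong :: "nat \<Rightarrow> (nat \<Rightarrow> nat) set \<Rightarrow> nat list \<Rightarrow> nat list \<Rightarrow> bool"
  for n :: nat and H :: "(nat \<Rightarrow> nat) set" where
  rel: "\<sigma> \<in> H \<Longrightarrow> Scong n H (x @ zword n @ y) (x @ map \<sigma> (zword n) @ y)"
| refl: "Scong n H w w"
| sym: "Scong n H u v \<Longrightarrow> Scong n H v u"
| trans: "Scong n H u v \<Longrightarrow> Scong n H v w \<Longrightarrow> Scong n H u w"

definition SzS :: "nat \<Rightarrow> (nat \<Rightarrow> nat) set \<Rightarrow> nat list set" where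
  "SzS n H = {w \<in> words n. \<exists>u\<in>words n. \<exists>v\<in>words n. Scong n H w (u @ zword n @ v)}"

definition prime_ideal_S :: "nat \<Rightarrow> (nat \<Rightarrow> nat) set \<Rightarrow> nat list set \<Rightarrow> bool" where
  "prime_ideal_S n H Q \<longleftrightarrow>
     Q \<subseteq> words n \<and>
     (\<forall>w\<in>Q. \<forall>w'\<in>words n. Scong n H w w' \<longrightarrow> w' \<in> Q) \<and>
     (\<forall>w\<in>Q. \<forall>u\<in>words n. \<forall>v\<in>words n. u @ w @ v \<in> Q) \<and>
     Q \<noteq> words n \<and>
     (\<forall>u\<in>words n. \<forall>v\<in>words n.
        (\<forall>s\<in>words n. u @ s @ v \<in> Q) \<longrightarrow> u \<in> Q \<or> v \<in> Q)"

end

theory Submission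
  imports Defs
begin

definition hasZ :: "nat \<Rightarrow> (nat \<Rightarrow> nat) set \<Rightarrow> nat list \<Rightarrow> bool" where
  "hasZ n H w \<longleftrightarrow> (\<exists>x y \<sigma>. \<sigma> \<in> H \<and> w = x @ map \<sigma> (zword n) @ y)"

lemma Scong_len: "Scong n H a b \<Longrightarrow> length a = length b"
  by (induction rule: Scong.induct) (auto simp: zword_def)

lemma Scong_app: "Scong n H a b \<Longrightarrow> Scong n H (u @ a @ v) (u @ b @ v)"
proof (induction rule: Scong.induct)
  case (rel \<sigma> x y)
  then show ?case using Scong.rel[of \<sigma> H n "u @ x" "y @ v"] by simp
next
  case (refl w) then show ?case by (rule Scong.refl)
next
  case (sym a b) show ?case using sym(2) by (rule Scong.sym)
next
  case (trans a b c) then show ?case by (meson Scong.trans)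
qed

lemma Scong_hasZ:
  assumes "id \<in> H"
  shows "Scong n H a b \<Longrightarrow> a = b \<or> (hasZ n H a \<and> hasZ n H b)"
proof (induction rule: Scong.induct)
  case (rel \<sigma> x y)
  then show ?case using assms unfolding hasZ_def by (metis list.map_id)
qed auto

lemma window:
  fixes u v p x y :: "nat list"
  assumes "u \<noteq> []" "v \<noteq> []" "distinct p" "length p \<ge> 3"
    and eq: "u @ [last u, hd v] @ v = x @ p @ y"
  shows "(\<exists>a b. u = a @ p @ b) \<or> (\<exists>a b. v = a @ p @ b)"
proof -
  define w where "w = u @ [last u, hd v] @ v"
  define i where "i = length x"
  define m where "m = length u"
  have wp: "\<And>k. k < length p \<Longrightarrow> w ! (i + k) = p ! k"
    unfolding w_def i_def using eq by (simp add: nth_append)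
  have lenw: "length w = m + 2 + length v" unfolding w_def m_def by simp
  have ilen: "i + length p \<le> length w" unfolding w_def i_def using arg_cong[OF eq, of length] by simp
  have w1: "w ! (m - 1) = w ! m"
    unfolding w_def m_def using assms(1)
    by (simp add: nth_append last_conv_nth)
  have w2: "w ! (m + 1) = w ! (m + 2)"
    unfolding w_def m_def using assms(2)
    by (simp add: nth_append hd_conv_nth)
  have m0: "m > 0" using assms(1) unfolding m_def by simp
  have dist: "\<And>k1 k2. k1 < length p \<Longrightarrow> k2 < length p \<Longrightarrow> k1 \<noteq> k2 \<Longrightarrow> w ! (i+k1) \<noteq> w ! (i+k2)"
    using wp assms(3) by (simp add: nth_eq_iff_index_eq)
  show ?thesis
  proof (cases "i + length p \<le> m")
    case True
    have "take m (u @ [last u, hd v] @ v) = u" by (simp add: m_def)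
    then have "take m (x @ p @ y) = u" unfolding eq .
    then have "u = take m (x @ p @ y)" by simp
    also have "\<dots> = x @ p @ take (m - i - length p) y" using True by (simp add: i_def)
    finally have "u = x @ p @ take (m - i - length p) y" .
    then show ?thesis by blast
  next
    case F1: False
    show ?thesis
    proof (cases "i \<ge> m + 2")
      case True
      have "drop (m+2) (u @ [last u, hd v] @ v) = v" by (simp add: m_def)
      then have "drop (m+2) (x @ p @ y) = v" unfolding eq .
      then have "v = drop (m+2) (x @ p @ y)" by simp
      also have "\<dots> = drop (m+2) x @ p @ y" using True by (simp add: i_def)
      finally have "v = drop (m+2) x @ p @ y" .
      then show ?thesis by blast
    next
      case False
      show ?thesis
      proof (cases "i \<le> m - 1")
        case True
        then show ?thesis using dist[of "m - 1 - i" "m - i"] w1 F1 m0 by auto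
      next
        case False
        then show ?thesis using dist[of "m + 1 - i" "m + 2 - i"] w2 F1 \<open>\<not> i \<ge> m + 2\<close> assms(4) ilen
          by auto
      qed
    qed
  qed
qed

theorem lemma4p2:
  fixes n :: nat and H :: "(nat \<Rightarrow> nat) set"
  assumes "subgroup H (sym_group n)"
    and "\<forall>\<sigma>\<in>H. \<forall>\<tau>\<in>H. \<sigma> \<circ> \<tau> = \<tau> \<circ> \<sigma>"
    and "n \<ge> 3"
  shows "prime_ideal_S n H (SzS n H)"
proof -
  have idH: "id \<in> H" using subgroup.one_closed[OF assms(1)] by (simp add: sym_group_one)
  have permH: "\<And>\<sigma>. \<sigma> \<in> H \<Longrightarrow> \<sigma> permutes {1..n}"
    using subgroup.subset[OF assms(1)] by (auto simp: sym_group_carrier)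
  have distZ: "\<And>\<sigma>. \<sigma> \<in> H \<Longrightarrow> distinct (map \<sigma> (zword n))"
  proof -
    fix \<sigma> assume "\<sigma> \<in> H"
    then have "inj_on \<sigma> {1..n}" using permH permutes_inj_on by blast
    moreover have "set (zword n) \<subseteq> {1..n}" by (auto simp: zword_def)
    ultimately have "inj_on \<sigma> (set (zword n))" by (rule inj_on_subset)
    moreover have "distinct (zword n)" by (simp add: zword_def)
    ultimately show "distinct (map \<sigma> (zword n))" by (simp add: distinct_map)
  qed
  have lenZ: "\<And>\<sigma>. length (map \<sigma> (zword n)) = n" by (simp add: zword_def)
  have wapp: "\<And>a b. a @ b \<in> words n \<longleftrightarrow> a \<in> words n \<and> b \<in> words n"
    by (auto simp: words_def)
  have notS: "\<And>w. w \<in> words n \<Longrightarrow> w \<notin> SzS n H \<Longrightarrow> \<not> hasZ n H w"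
  proof
    fix w assume w: "w \<in> words n" "w \<notin> SzS n H" "hasZ n H w"
    then obtain x y \<sigma> where xy: "\<sigma> \<in> H" "w = x @ map \<sigma> (zword n) @ y"
      unfolding hasZ_def by blast
    have "Scong n H w (x @ zword n @ y)" using Scong.sym[OF Scong.rel[OF xy(1), of n x y]] xy(2) by simp
    moreover have "x \<in> words n" "y \<in> words n" using w(1) unfolding xy(2) wapp by simp_all
    ultimately show False using w unfolding SzS_def by blast
  qed
  have inS: "\<And>w. w \<in> SzS n H \<Longrightarrow> hasZ n H w"
  proof -
    fix w assume "w \<in> SzS n H"
    then obtain a b where "Scong n H w (a @ zword n @ b)" unfolding SzS_def by blast
    moreover have "hasZ n H (a @ zword n @ b)" unfolding hasZ_def
      using idH by (intro exI[of _ a] exI[of _ b] exI[of _ id]) simp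
    ultimately show "hasZ n H w" using Scong_hasZ[OF idH] by blast
  qed
  have c1: "SzS n H \<subseteq> words n" unfolding SzS_def by auto
  have c2: "\<forall>w\<in>SzS n H. \<forall>w'\<in>words n. Scong n H w w' \<longrightarrow> w' \<in> SzS n H"
  proof (intro ballI impI)
    fix w w' assume w: "w \<in> SzS n H" and w': "w' \<in> words n" and c: "Scong n H w w'"
    then obtain a b where ab: "a \<in> words n" "b \<in> words n" "Scong n H w (a @ zword n @ b)"
      unfolding SzS_def by blast
    have "Scong n H w' (a @ zword n @ b)" using Scong.trans[OF Scong.sym[OF c] ab(3)] .
    then show "w' \<in> SzS n H" using ab w' unfolding SzS_def by blast
  qed
  have c3: "\<forall>w\<in>SzS n H. \<forall>u\<in>words n. \<forall>v\<in>words n. u @ w @ v \<in> SzS n H"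
  proof (intro ballI)
    fix w u v assume w: "w \<in> SzS n H" and uv: "u \<in> words n" "v \<in> words n"
    then obtain a b where ab: "a \<in> words n" "b \<in> words n" "Scong n H w (a @ zword n @ b)"
      unfolding SzS_def by blast
    have "Scong n H (u @ w @ v) ((u @ a) @ zword n @ (b @ v))"
      using Scong_app[OF ab(3), of u v] by simp
    moreover have "w \<in> words n" using w c1 by blast
    then have "u @ w @ v \<in> words n" using uv unfolding wapp by simp
    moreover have "u @ a \<in> words n" "b @ v \<in> words n" using ab uv unfolding wapp by simp_all
    ultimately show "u @ w @ v \<in> SzS n H" unfolding SzS_def by blast
  qed
  have c4: "SzS n H \<noteq> words n"
  proof
    assume "SzS n H = words n"
    then have "[] \<in> SzS n H" by (simp add: words_def)
    then obtain a b where "Scong n H [] (a @ zword n @ b)" unfolding SzS_def by blast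
    from Scong_len[OF this] assms(3) show False by (simp add: zword_def)
  qed
  have c5: "\<forall>u\<in>words n. \<forall>v\<in>words n.
        (\<forall>s\<in>words n. u @ s @ v \<in> SzS n H) \<longrightarrow> u \<in> SzS n H \<or> v \<in> SzS n H"
  proof (intro ballI impI)
    fix u v assume u: "u \<in> words n" and v: "v \<in> words n"
      and all: "\<forall>s\<in>words n. u @ s @ v \<in> SzS n H"
    show "u \<in> SzS n H \<or> v \<in> SzS n H"
    proof (rule ccontr)
      assume "\<not> ?thesis"
      then have nu: "\<not> hasZ n H u" and nv: "\<not> hasZ n H v" using notS u v by auto
      show False
      proof (cases "u = [] \<or> v = []")
        case True
        have "[] \<in> words n" by (simp add: words_def)
        then have "u @ [] @ v \<in> SzS n H" using all by blast
        then have "hasZ n H (u @ v)" using inS by simp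
        then show False using True nu nv by auto
      next
        case False
        define s where "s = [last u, hd v]"
        have "last u \<in> set u" "hd v \<in> set v" using False by auto
        then have "s \<in> words n" using u v unfolding s_def words_def by auto
        then have "hasZ n H (u @ s @ v)" using all inS by blast
        then obtain x y \<sigma> where xy: "\<sigma> \<in> H" "u @ s @ v = x @ map \<sigma> (zword n) @ y"
          unfolding hasZ_def by blast
        from window[of u v "map \<sigma> (zword n)" x y] xy False distZ[OF xy(1)] assms(3) lenZ
        have "(\<exists>a b. u = a @ map \<sigma> (zword n) @ b) \<or> (\<exists>a b. v = a @ map \<sigma> (zword n) @ b)"
          unfolding s_def by auto
        then show False using nu nv xy(1) unfolding hasZ_def by blast
      qed
    qed
  qed
  show ?thesis unfolding prime_ideal_S_def using c1 c2 c3 c4 c5 by blast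
qed

end
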